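(* Let $r \in \mathbb{Q} \cap (0,1)$ be such that $S_r$ is atomic (equivalently, $\mathsf{n}(r) > 1$). Let $x \in S_r \setminus \{0\}$ and let $z = \sum_{i=0}^N \alpha_i r^i \in \mathsf{Z}(x)$, where $N \in \mathbb{N}$ and $\alpha_0, \dots, \alpha_N \in \mathbb{N}_0$. Then: (1) $|z| = \min \mathsf{L}(x)$ if and only if $\alpha_i < \mathsf{d}(r)$ for all $i \in \{1, \dots, N\}$; (2) there is exactly one factorization in $\mathsf{Z}(x)$ of minimum length; (3) $\sup \mathsf{L}(x) = \infty$ if and only if $\alpha_i \ge \mathsf{n}(r)$ for some $i \in \{0, \dots, N\}$; (4) $|\mathsf{Z}(x)| = 1$ if and only if $|\mathsf{L}(x)| = 1$, and in this case $\alpha_i < \mathsf{n}(r)$ for all $i \in \{0, \dots, N\}$.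
   Context: For $q \in \mathbb{Q}_{>0}$, $\mathsf{n}(q)$ and $\mathsf{d}(q)$ denote the unique positive integers with $\gcd(\mathsf{n}(q),\mathsf{d}(q))=1$ and $q = \mathsf{n}(q)/\mathsf{d}(q)$. For $r \in \mathbb{Q}_{>0}$, $S_r$ denotes the additive submonoid of $(\mathbb{Q}_{\ge 0},+)$ generated by $\{r^n : n \in \mathbb{N}_0\}$. $S_r$ is atomic exactly when $r=1$ or $\mathsf{n}(r)>1$; if moreover $r \notin \mathbb{N}$, its atoms (nonzero elements not expressible as a sum of two nonzero elements) are exactly the pairwise distinct elements $r^n$, $n \in \mathbb{N}_0$. A factorization of $x \in S_r$ is a formal finite sum $\sum_i \alpha_i r^i$ with $\alpha_i \in \mathbb{N}_0$ (an element of the free commutative monoid on the atoms) whose value in $\mathbb{Q}$ is $x$; $\mathsf{Z}(x)$ is the set of factorizations of $x$, the length of $z=\sum_i \alpha_i r^i$ is $|z| = \sum_i \alpha_i$, and $\mathsf{L}(x) = \{|z| : z \in \mathsf{Z}(x)\}$ is the set of lengths of $x$. Two formal sums differing only by zero coefficients are identified. *)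

theory Defs
  imports Complex_Main "HOL-Library.Extended_Nat"
begin

definition numr :: "rat \<Rightarrow> int" where "numr q = fst (quotient_of q)"
definition denr :: "rat \<Rightarrow> int" where "denr q = snd (quotient_of q)"

inductive_set S :: "rat \<Rightarrow> rat set" for r :: rat where
  zero: "0 \<in> S r"
| pow: "r ^ n \<in> S r"
| add: "a \<in> S r \<Longrightarrow> b \<in> S r \<Longrightarrow> a + b \<in> S r"

text \<open>Formal sums \<Sum> \<alpha>_i r^i are represented by finitely supported coefficient functions
  \<alpha> :: nat \<Rightarrow> nat (zero coefficients automatically identified).\<close>
definition fsupp :: "(nat \<Rightarrow> nat) \<Rightarrow> bool" where
  "fsupp \<alpha> \<longleftrightarrow> finite {i. \<alpha> i \<noteq> 0}"

definition fval :: "rat \<Rightarrow> (nat \<Rightarrow> nat) \<Rightarrow> rat" where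
  "fval r \<alpha> = (\<Sum>i\<in>{i. \<alpha> i \<noteq> 0}. of_nat (\<alpha> i) * r ^ i)"

definition flen :: "(nat \<Rightarrow> nat) \<Rightarrow> nat" where
  "flen \<alpha> = (\<Sum>i\<in>{i. \<alpha> i \<noteq> 0}. \<alpha> i)"

definition Z :: "rat \<Rightarrow> rat \<Rightarrow> (nat \<Rightarrow> nat) set" where
  "Z r x = {\<alpha>. fsupp \<alpha> \<and> fval r \<alpha> = x}"

definition L :: "rat \<Rightarrow> rat \<Rightarrow> nat set" where
  "L r x = flen ` Z r x"

end

theory Submission imports Defs begin

lemma fval_on:
  assumes "finite A" "{i. f i \<noteq> 0} \<subseteq> A"
  shows "fval r f = (\<Sum>i\<in>A. of_nat (f i) * r ^ i)"
  unfolding fval_def using assms by (intro sum.mono_neutral_left) auto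

lemma flen_on:
  assumes "finite A" "{i. f i \<noteq> 0} \<subseteq> A"
  shows "flen f = (\<Sum>i\<in>A. f i)"
  unfolding flen_def using assms by (intro sum.mono_neutral_left) auto

lemma fsupp_upd: "fsupp f \<Longrightarrow> fsupp (f(i := c))"
  unfolding fsupp_def by (rule finite_subset[of _ "insert i {i. f i \<noteq> 0}"]) auto

lemma fval_upd:
  assumes "fsupp f"
  shows "fval r (f(i := f i + c)) = fval r f + of_nat c * r ^ i"
proof -
  let ?A = "insert i {i. f i \<noteq> 0}"
  have fin: "finite ?A" using assms unfolding fsupp_def by auto
  have "fval r (f(i := f i + c)) = (\<Sum>k\<in>?A. of_nat ((f(i := f i + c)) k) * r ^ k)"
    by (rule fval_on[OF fin]) auto
  also have "\<dots> = of_nat (f i + c) * r ^ i + (\<Sum>k\<in>?A - {i}. of_nat (f k) * r ^ k)"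
    using fin by (subst sum.remove[of _ i]) auto
  also have "\<dots> = of_nat c * r ^ i + (\<Sum>k\<in>?A. of_nat (f k) * r ^ k)"
    using fin by (subst (2) sum.remove[of _ i]) (auto simp: algebra_simps)
  also have "(\<Sum>k\<in>?A. of_nat (f k) * r ^ k) = fval r f"
    by (rule fval_on[OF fin, symmetric]) auto
  finally show ?thesis by (simp add: fun_upd_def)
qed

lemma flen_upd:
  assumes "fsupp f"
  shows "flen (f(i := f i + c)) = flen f + c"
proof -
  let ?A = "insert i {i. f i \<noteq> 0}"
  have fin: "finite ?A" using assms unfolding fsupp_def by auto
  have "flen (f(i := f i + c)) = (\<Sum>k\<in>?A. (f(i := f i + c)) k)"
    by (rule flen_on[OF fin]) auto
  also have "\<dots> = (f i + c) + (\<Sum>k\<in>?A - {i}. f k)"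
    using fin by (subst sum.remove[of _ i]) auto
  also have "\<dots> = c + (\<Sum>k\<in>?A. f k)"
    using fin by (subst (2) sum.remove[of _ i]) (auto simp: algebra_simps)
  also have "(\<Sum>k\<in>?A. f k) = flen f"
    by (rule flen_on[OF fin, symmetric]) auto
  finally show ?thesis by (simp add: fun_upd_def)
qed

lemma move:
  assumes "fsupp f" "a \<le> f j" "of_nat a * r ^ j = of_nat b * r ^ k" "j \<noteq> k"
  defines "g \<equiv> (f(j := f j - a))"
  defines "h \<equiv> g(k := g k + b)"
  shows "fsupp h" "fval r h = fval r f" "flen h + a = flen f + b" "b \<le> h k"
proof -
  have fg: "fsupp g" using assms(1) unfolding g_def by (rule fsupp_upd)
  have f_eq: "f = g(j := g j + a)" using assms(2) unfolding g_def by auto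
  show "fsupp h" unfolding h_def by (rule fsupp_upd[OF fg])
  have "fval r f = fval r g + of_nat a * r ^ j" by (subst f_eq, rule fval_upd[OF fg])
  moreover have "fval r h = fval r g + of_nat b * r ^ k" unfolding h_def by (rule fval_upd[OF fg])
  ultimately show "fval r h = fval r f" using assms(3) by simp
  have "flen f = flen g + a" by (subst f_eq, rule flen_upd[OF fg])
  moreover have "flen h = flen g + b" unfolding h_def by (rule flen_upd[OF fg])
  ultimately show "flen h + a = flen f + b" by simp
  show "b \<le> h k" unfolding h_def by simp
qed

lemma core:
  fixes n d :: nat
  assumes "coprime n d"
  shows "(\<Sum>i\<le>M. b i * n ^ i * d ^ (M - i)) = (\<Sum>i\<le>M. c i * n ^ i * d ^ (M - i))
    \<Longrightarrow> (\<forall>i\<in>{1..M}. b i < d \<and> c i < d) \<Longrightarrow> \<forall>i\<le>M. b i = c i"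
proof (induction M)
  case 0
  then show ?case by simp
next
  case (Suc M)
  have split: "(\<Sum>i\<le>Suc M. e i * n ^ i * d ^ (Suc M - i)) = e (Suc M) * n ^ Suc M + d * (\<Sum>i\<le>M. e i * n ^ i * d ^ (M - i))" for e
    by (simp add: sum_distrib_left Suc_diff_le algebra_simps)
  have bl: "b (Suc M) < d" "c (Suc M) < d" using Suc.prems(2) by auto
  define B where "B = (\<Sum>i\<le>M. b i * n ^ i * d ^ (M - i))"
  define C where "C = (\<Sum>i\<le>M. c i * n ^ i * d ^ (M - i))"
  have eq0: "b (Suc M) * n ^ Suc M + d * B = c (Suc M) * n ^ Suc M + d * C"
    using Suc.prems(1) unfolding split B_def C_def .
  hence eq: "int (b (Suc M)) * int n ^ Suc M + int d * int B = int (c (Suc M)) * int n ^ Suc M + int d * int C"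
    by (metis of_nat_add of_nat_mult of_nat_power)
  have "(int (b (Suc M)) - int (c (Suc M))) * int n ^ Suc M = int d * (int C - int B)"
    using eq by (simp add: algebra_simps)
  hence "int d dvd (int (b (Suc M)) - int (c (Suc M))) * int n ^ Suc M"
    by simp
  moreover have "coprime (int d) (int n ^ Suc M)" using assms by (simp add: coprime_commute)
  ultimately have "int d dvd (int (b (Suc M)) - int (c (Suc M)))"
    using coprime_dvd_mult_left_iff by blast
  moreover have "\<bar>int (b (Suc M)) - int (c (Suc M))\<bar> < int d" using bl by auto
  ultimately have top: "b (Suc M) = c (Suc M)"
    using dvd_imp_le_int[of "int (b (Suc M)) - int (c (Suc M))" "int d"] by fastforce
  have d0: "d > 0" using bl by simp
  have "(\<Sum>i\<le>M. b i * n ^ i * d ^ (M - i)) = (\<Sum>i\<le>M. c i * n ^ i * d ^ (M - i))"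
    using eq0 d0 unfolding top B_def C_def by simp
  moreover have "\<forall>i\<in>{1..M}. b i < d \<and> c i < d" using Suc.prems(2) by auto
  ultimately have "\<forall>i\<le>M. b i = c i" by (rule Suc.IH)
  then show ?case using top le_Suc_eq by auto
qed

lemma unique_red:
  fixes r :: rat and nn dd :: nat
  assumes r: "of_nat dd * r = of_nat nn" and cop: "coprime nn dd"
    and fb: "fsupp b" and fc: "fsupp c" and eqv: "fval r b = fval r c"
    and rb: "\<forall>i\<ge>1. b i < dd" and rc: "\<forall>i\<ge>1. c i < dd"
  shows "b = c"
proof -
  have "finite ({i. b i \<noteq> 0} \<union> {i. c i \<noteq> 0})" using fb fc unfolding fsupp_def by auto
  then obtain M where M: "{i. b i \<noteq> 0} \<union> {i. c i \<noteq> 0} \<subseteq> {..<M}"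
    using finite_nat_bounded by blast
  have pw: "of_nat dd ^ M * r ^ i = (of_nat (nn ^ i * dd ^ (M - i)) :: rat)" if "i \<le> M" for i
  proof -
    have "of_nat dd ^ M * r ^ i = of_nat dd ^ (M - i) * (of_nat dd * r) ^ i"
      using that by (simp add: power_mult_distrib power_add[symmetric])
    then show ?thesis using r by simp
  qed
  have sv: "of_nat dd ^ M * fval r e = of_nat (\<Sum>i\<le>M. e i * nn ^ i * dd ^ (M - i))"
    if "{i. e i \<noteq> 0} \<subseteq> {..<M}" for e
  proof -
    have "fval r e = (\<Sum>i\<le>M. of_nat (e i) * r ^ i)"
      by (rule fval_on) (use that in auto)
    hence "of_nat dd ^ M * fval r e = (\<Sum>i\<le>M. of_nat (e i) * (of_nat dd ^ M * r ^ i))"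
      by (simp add: sum_distrib_left algebra_simps)
    also have "\<dots> = (\<Sum>i\<le>M. of_nat (e i * nn ^ i * dd ^ (M - i)))"
      by (rule sum.cong) (auto simp: pw)
    finally show ?thesis by simp
  qed
  have "(\<Sum>i\<le>M. b i * nn ^ i * dd ^ (M - i)) = (\<Sum>i\<le>M. c i * nn ^ i * dd ^ (M - i))"
    using sv[of b] sv[of c] M eqv by (metis (no_types, lifting) le_sup_iff of_nat_eq_iff)
  moreover have "\<forall>i\<in>{1..M}. b i < dd \<and> c i < dd" using rb rc by auto
  ultimately have "\<forall>i\<le>M. b i = c i" by (rule core[OF cop])
  moreover have "\<forall>i>M. b i = c i"
  proof (intro allI impI)
    fix i assume "M < i"
    hence "i \<notin> {..<M}" by simp
    hence "b i = 0" "c i = 0" using M by blast+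
    thus "b i = c i" by simp
  qed
  ultimately show ?thesis by (metis not_le ext)
qed

theorem lemma3p1:
  fixes r x :: rat and \<alpha> :: "nat \<Rightarrow> nat" and N :: nat
  assumes "0 < r" and "r < 1"
    and "numr r > 1"
    and "x \<in> S r" and "x \<noteq> 0"
    and "\<forall>i>N. \<alpha> i = 0"
    and "\<alpha> \<in> Z r x"
  shows "(flen \<alpha> = Inf (L r x) \<longleftrightarrow> (\<forall>i\<in>{1..N}. int (\<alpha> i) < denr r))
    \<and> (\<exists>!\<beta>. \<beta> \<in> Z r x \<and> flen \<beta> = Inf (L r x))
    \<and> ((Sup (enat ` L r x) = \<infinity>) \<longleftrightarrow> (\<exists>i\<in>{0..N}. int (\<alpha> i) \<ge> numr r))
    \<and> ((card (Z r x) = 1 \<longleftrightarrow> card (L r x) = 1)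
       \<and> (card (Z r x) = 1 \<longrightarrow> (\<forall>i\<in>{0..N}. int (\<alpha> i) < numr r)))"
proof -
  obtain p q where pq: "quotient_of r = (p, q)" by (cases "quotient_of r") auto
  have np: "numr r = p" and dq: "denr r = q" using pq by (simp_all add: numr_def denr_def)
  have q0: "q > 0" using quotient_of_denom_pos[OF pq] .
  have cpq: "coprime p q" using quotient_of_coprime[OF pq] .
  have rpq: "r = of_int p / of_int q" using quotient_of_div[OF pq] .
  have p1: "p > 1" using assms(3) np by simp
  have pltq: "p < q"
  proof -
    have "of_int p / of_int q < (1::rat)" using rpq assms(2) by simp
    hence "of_int p < (of_int q :: rat)" using q0 by (simp add: divide_less_eq)
    thus ?thesis by simp
  qed
  define nn where "nn = nat p"
  define dd where "dd = nat q"
  have pnn: "p = int nn" and qdd: "q = int dd" using p1 q0 unfolding nn_def dd_def by simp_all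
  have nn2: "nn \<ge> 2" and nd: "nn < dd" using p1 pltq pnn qdd by simp_all
  have rel: "of_nat dd * r = of_nat nn"
    using rpq q0 pnn qdd by (simp add: field_simps)
  have cop: "coprime nn dd" using cpq pnn qdd by simp
  have Zi: "\<beta> \<in> Z r x \<longleftrightarrow> fsupp \<beta> \<and> fval r \<beta> = x" for \<beta> unfolding Z_def by simp
  define m where "m = Inf (L r x)"
  have Lne: "L r x \<noteq> {}" using assms(7) unfolding L_def by auto
  have "m \<in> L r x" unfolding m_def by (rule Inf_nat_def1[OF Lne])
  then obtain \<mu> where \<mu>Z: "\<mu> \<in> Z r x" and \<mu>m: "flen \<mu> = m" unfolding L_def by auto
  have mle: "m \<le> flen \<beta>" if "\<beta> \<in> Z r x" for \<beta>
  proof -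
    have "flen \<beta> \<in> L r x" using that unfolding L_def by auto
    thus ?thesis unfolding m_def Inf_nat_def by (rule Least_le)
  qed
  have min_red: "\<forall>i\<ge>1. \<beta> i < dd" if "\<beta> \<in> Z r x" "flen \<beta> = m" for \<beta>
  proof (rule ccontr)
    assume "\<not> (\<forall>i\<ge>1. \<beta> i < dd)"
    then obtain i where i1: "i \<ge> 1" and bi: "dd \<le> \<beta> i" by (auto simp: not_less)
    have pw: "of_nat dd * r ^ i = of_nat nn * r ^ (i - 1)"
    proof -
      have "r ^ i = r * r ^ (i - 1)" using i1 by (metis Suc_diff_le diff_Suc_1 power_Suc)
      thus ?thesis using rel by (simp add: mult.assoc[symmetric])
    qed
    have fb: "fsupp \<beta>" using that Zi by auto
    note mv = move[OF fb bi pw, of] 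
    have "i \<noteq> i - 1" using i1 by simp
    note mv = mv[OF this]
    have "(\<beta>(i := \<beta> i - dd))(i - 1 := (\<beta>(i := \<beta> i - dd)) (i - 1) + nn) \<in> Z r x"
      using mv(1,2) that(1) Zi by auto
    hence "m \<le> flen ((\<beta>(i := \<beta> i - dd))(i - 1 := (\<beta>(i := \<beta> i - dd)) (i - 1) + nn))" by (rule mle)
    thus False using mv(3) that(2) nd by linarith
  qed
  have uniq: "\<beta> = \<gamma>" if "\<beta> \<in> Z r x" "\<gamma> \<in> Z r x" "\<forall>i\<ge>1. \<beta> i < dd" "\<forall>i\<ge>1. \<gamma> i < dd" for \<beta> \<gamma>
    using unique_red[OF rel cop, of \<beta> \<gamma>] that Zi by auto
  have claimB: "\<beta> = \<alpha>" if small: "\<forall>i. \<alpha> i < nn" and bZ: "\<beta> \<in> Z r x" for \<beta>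
  proof -
    have ared: "\<forall>i\<ge>1. \<alpha> i < dd" using small nd less_trans by blast
    have "\<forall>\<beta>. \<beta> \<in> Z r x \<longrightarrow> flen \<beta> = k \<longrightarrow> \<beta> = \<alpha>" for k
    proof (induction k rule: less_induct)
      case (less k)
      show ?case
      proof (intro allI impI)
        fix \<beta> assume bZ: "\<beta> \<in> Z r x" and bk: "flen \<beta> = k"
        show "\<beta> = \<alpha>"
        proof (cases "\<forall>i\<ge>1. \<beta> i < dd")
          case True
          then show ?thesis using uniq[OF bZ assms(7) True ared] by simp
        next
          case False
          then obtain i where i1: "i \<ge> 1" and bi: "dd \<le> \<beta> i" by (auto simp: not_less)
          have pw: "of_nat dd * r ^ i = of_nat nn * r ^ (i - 1)"
          proof -
            have "r ^ i = r * r ^ (i - 1)" using i1 by (metis Suc_diff_le diff_Suc_1 power_Suc)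
            thus ?thesis using rel by (simp add: mult.assoc[symmetric])
          qed
          have fb: "fsupp \<beta>" using bZ Zi by auto
          have "i \<noteq> i - 1" using i1 by simp
          note mv = move[OF fb bi pw this]
          define h where "h = (\<beta>(i := \<beta> i - dd))(i - 1 := (\<beta>(i := \<beta> i - dd)) (i - 1) + nn)"
          have hZ: "h \<in> Z r x" using mv(1,2) bZ Zi unfolding h_def by auto
          have "flen h < k" using mv(3) bk nd unfolding h_def by linarith
          hence "h = \<alpha>" using less.IH hZ by blast
          moreover have "nn \<le> h (i - 1)" using mv(4) unfolding h_def .
          ultimately show ?thesis using small by (metis not_le)
        qed
      qed
    qed
    thus ?thesis using bZ by blast
  qed
  have claimA: "\<forall>\<gamma> j. \<gamma> \<in> Z r x \<longrightarrow> nn \<le> \<gamma> j \<longrightarrow> (\<exists>\<delta>\<in>Z r x. flen \<gamma> + k \<le> flen \<delta>)" for k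
  proof (induction k)
    case 0
    then show ?case by auto
  next
    case (Suc k)
    show ?case
    proof (intro allI impI)
      fix \<gamma> j assume gZ: "\<gamma> \<in> Z r x" and gj: "nn \<le> \<gamma> j"
      have pw: "of_nat nn * r ^ j = of_nat dd * r ^ (Suc j)"
        using rel by (simp add: algebra_simps)
      have fg: "fsupp \<gamma>" using gZ Zi by auto
      have "j \<noteq> Suc j" by simp
      note mv = move[OF fg gj pw this]
      define h where "h = (\<gamma>(j := \<gamma> j - nn))(Suc j := (\<gamma>(j := \<gamma> j - nn)) (Suc j) + dd)"
      have hZ: "h \<in> Z r x" using mv(1,2) gZ Zi unfolding h_def by auto
      have hl: "flen \<gamma> + 1 \<le> flen h" using mv(3) nd unfolding h_def by linarith
      have "nn \<le> h (Suc j)" using mv(4) nd unfolding h_def by linarith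
      then obtain \<delta> where "\<delta> \<in> Z r x" "flen h + k \<le> flen \<delta>" using Suc.IH hZ by blast
      thus "\<exists>\<delta>\<in>Z r x. flen \<gamma> + Suc k \<le> flen \<delta>" using hl by (intro bexI[of _ \<delta>]) auto
    qed
  qed
  have big_iff: "(\<exists>i\<in>{0..N}. int (\<alpha> i) \<ge> numr r) \<longleftrightarrow> (\<exists>i. nn \<le> \<alpha> i)"
  proof
    assume "\<exists>i\<in>{0..N}. int (\<alpha> i) \<ge> numr r"
    thus "\<exists>i. nn \<le> \<alpha> i" using np pnn by auto
  next
    assume "\<exists>i. nn \<le> \<alpha> i"
    then obtain i where i: "nn \<le> \<alpha> i" by auto
    hence "i \<le> N" using assms(6) nn2 by (metis le_zero_eq not_le numeral_le_iff zero_neq_numeral order_trans)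
    thus "\<exists>i\<in>{0..N}. int (\<alpha> i) \<ge> numr r" using i np pnn by auto
  qed
  have Zsing: "Z r x = {\<alpha>}" if "\<forall>i. \<alpha> i < nn"
    using claimB[OF that] assms(7) by blast
  have unb: "\<exists>\<delta>\<in>Z r x. flen \<alpha> + k \<le> flen \<delta>" if "nn \<le> \<alpha> i" for i k
    using claimA[of k] assms(7) that by blast
  have P1: "flen \<alpha> = Inf (L r x) \<longleftrightarrow> (\<forall>i\<in>{1..N}. int (\<alpha> i) < denr r)"
  proof
    assume "flen \<alpha> = Inf (L r x)"
    hence "\<forall>i\<ge>1. \<alpha> i < dd" using min_red[OF assms(7)] m_def by simp
    thus "\<forall>i\<in>{1..N}. int (\<alpha> i) < denr r" using dq qdd by auto
  next
    assume a: "\<forall>i\<in>{1..N}. int (\<alpha> i) < denr r"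
    have "\<forall>i\<ge>1. \<alpha> i < dd"
    proof (intro allI impI)
      fix i :: nat assume "i \<ge> 1"
      show "\<alpha> i < dd"
      proof (cases "i \<le> N")
        case True thus ?thesis using a \<open>i \<ge> 1\<close> dq qdd by auto
      next
        case False thus ?thesis using assms(6) nd by auto
      qed
    qed
    hence "\<alpha> = \<mu>" using uniq[OF assms(7) \<mu>Z] min_red[OF \<mu>Z \<mu>m] by blast
    thus "flen \<alpha> = Inf (L r x)" using \<mu>m m_def by simp
  qed
  have P2: "\<exists>!\<beta>. \<beta> \<in> Z r x \<and> flen \<beta> = Inf (L r x)"
  proof
    show "\<mu> \<in> Z r x \<and> flen \<mu> = Inf (L r x)" using \<mu>Z \<mu>m m_def by simp
  next
    fix \<beta> assume "\<beta> \<in> Z r x \<and> flen \<beta> = Inf (L r x)"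
    thus "\<beta> = \<mu>" using uniq[of \<beta> \<mu>] min_red \<mu>Z \<mu>m m_def by simp
  qed
  have P3: "(Sup (enat ` L r x) = \<infinity>) \<longleftrightarrow> (\<exists>i. nn \<le> \<alpha> i)"
  proof
    assume s: "Sup (enat ` L r x) = \<infinity>"
    show "\<exists>i. nn \<le> \<alpha> i"
    proof (rule ccontr)
      assume "\<not> (\<exists>i. nn \<le> \<alpha> i)"
      hence "Z r x = {\<alpha>}" using Zsing by (auto simp: not_le)
      hence "L r x = {flen \<alpha>}" unfolding L_def by simp
      thus False using s by simp
    qed
  next
    assume "\<exists>i. nn \<le> \<alpha> i"
    then obtain i where i: "nn \<le> \<alpha> i" by auto
    have "Sup (enat ` L r x) = (top :: enat)"
    proof (subst Sup_eq_top_iff, intro allI impI)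
      fix y :: enat assume "y < top"
      then obtain k where yk: "y = enat k" by (cases y) auto
      obtain \<delta> where d: "\<delta> \<in> Z r x" "flen \<alpha> + Suc k \<le> flen \<delta>" using unb[OF i] by blast
      have "enat (flen \<delta>) \<in> enat ` L r x" using d(1) unfolding L_def by auto
      moreover have "y < enat (flen \<delta>)" using d(2) yk by simp
      ultimately show "\<exists>i\<in>enat ` L r x. y < i" by blast
    qed
    thus "Sup (enat ` L r x) = \<infinity>" by (simp add: top_enat_def)
  qed
  have P4: "(card (Z r x) = 1 \<longleftrightarrow> card (L r x) = 1)
       \<and> (card (Z r x) = 1 \<longrightarrow> (\<forall>i. \<alpha> i < nn))"
  proof -
    have a: "\<forall>i. \<alpha> i < nn" if "card (Z r x) = 1"
    proof (rule ccontr)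
      assume "\<not> (\<forall>i. \<alpha> i < nn)"
      then obtain i where i: "nn \<le> \<alpha> i" by (auto simp: not_less)
      obtain \<delta> where d: "\<delta> \<in> Z r x" "flen \<alpha> + 1 \<le> flen \<delta>" using unb[OF i] by blast
      from that obtain b where "Z r x = {b}" by (rule card_1_singletonE)
      thus False using d assms(7) by auto
    qed
    have b: "card (Z r x) = 1" if "card (L r x) = 1"
    proof -
      from that obtain l where Ll: "L r x = {l}" by (rule card_1_singletonE)
      have "\<forall>i. \<alpha> i < nn"
      proof (rule ccontr)
        assume "\<not> (\<forall>i. \<alpha> i < nn)"
        then obtain i where i: "nn \<le> \<alpha> i" by (auto simp: not_less)
        obtain \<delta> where d: "\<delta> \<in> Z r x" "flen \<alpha> + Suc l \<le> flen \<delta>" using unb[OF i] by blast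
        have "flen \<delta> \<in> L r x" using d(1) unfolding L_def by auto
        thus False using Ll d(2) by auto
      qed
      thus ?thesis using Zsing by simp
    qed
    have c: "card (L r x) = 1" if "card (Z r x) = 1"
      using Zsing[OF a[OF that]] unfolding L_def by simp
    show ?thesis using a b c by blast
  qed
  have P4': "card (Z r x) = 1 \<longrightarrow> (\<forall>i\<in>{0..N}. int (\<alpha> i) < numr r)"
    using P4 np pnn by auto
  show ?thesis using P1 P2 P3 P4 P4' big_iff by blast
qed

end
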